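(* Let $K$ be a field, $S=K[x_1,\ldots,x_n]$, let $I\subset S$ be a monomial ideal and let $u\in S$ be a monomial which is regular on $S/I$. Then $S/I$ is pretty clean if and only if $S/(I,u)$ is pretty clean.
   Context: A prime filtration of $S/I$ (for a monomial ideal $I$) is a chain of monomial ideals $\mathcal F: I=I_0\subset I_1\subset\cdots\subset I_r=S$ such that $I_j/I_{j-1}\cong S/P_j$ (up to a shift of multidegree) for some (monomial) prime ideals $P_j$, $j=1,\ldots,r$. The filtration $\mathcal F$ is called pretty clean if for all $i<j$ with $P_i\subseteq P_j$ one has $P_i=P_j$. The module $S/I$ is called pretty clean if it has a pretty clean filtration. *)

theory Defs
  imports "HOL-Library.Poly_Mapping"
begin

text \<open>The polynomial ring S = K[x_v : v in 'v] over a field K, with a finite type 'v of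
  variables (so n = CARD('v)), is modelled as  the type mpoly below:
  finitely supported maps from exponent vectors to coefficients, with convolution product.\<close>

type_synonym ('v, 'k) mpoly = "('v \<Rightarrow>\<^sub>0 nat) \<Rightarrow>\<^sub>0 'k"

definition is_ideal :: "'a::comm_ring_1 set \<Rightarrow> bool" where
  "is_ideal I \<longleftrightarrow> 0 \<in> I \<and> (\<forall>f\<in>I. \<forall>g\<in>I. f + g \<in> I) \<and> (\<forall>s. \<forall>f\<in>I. s * f \<in> I)"

definition ideal_gen :: "'a::comm_ring_1 set \<Rightarrow> 'a set" where
  "ideal_gen G = \<Inter>{J. is_ideal J \<and> G \<subseteq> J}"

definition is_prime_ideal :: "'a::comm_ring_1 set \<Rightarrow> bool" where
  "is_prime_ideal P \<longleftrightarrow> is_ideal P \<and> P \<noteq> UNIV \<and> (\<forall>f g. f * g \<in> P \<longrightarrow> f \<in> P \<or> g \<in> P)"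

definition monom :: "('v \<Rightarrow>\<^sub>0 nat) \<Rightarrow> ('v, 'k::comm_ring_1) mpoly" where
  "monom a = Poly_Mapping.single a 1"

definition is_monomial :: "('v, 'k::comm_ring_1) mpoly \<Rightarrow> bool" where
  "is_monomial u \<longleftrightarrow> (\<exists>a. u = monom a)"

definition monomial_ideal :: "('v, 'k::comm_ring_1) mpoly set \<Rightarrow> bool" where
  "monomial_ideal I \<longleftrightarrow> (\<exists>G. (\<forall>g\<in>G. is_monomial g) \<and> I = ideal_gen G)"

definition regular_on_quot :: "('v, 'k::comm_ring_1) mpoly \<Rightarrow> ('v, 'k) mpoly set \<Rightarrow> bool" where
  "regular_on_quot u I \<longleftrightarrow> (\<forall>f. u * f \<in> I \<longrightarrow> f \<in> I) \<and> ideal_gen (I \<union> {u}) \<noteq> UNIV"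

text \<open>J/I \<cong> (S/P)(-a) as multigraded S-modules, for some shift a: there is an S-linear map
  phi : S \<rightarrow> J, homogeneous of multidegree a (it sends x^m to a scalar multiple of x^(m+a)),
  which induces an isomorphism S/P \<rightarrow> J/I (surjective modulo I, with preimage of I equal to P).\<close>
definition quot_iso_shift ::
  "('v, 'k::field) mpoly set \<Rightarrow> ('v, 'k) mpoly set \<Rightarrow> ('v, 'k) mpoly set \<Rightarrow> bool" where
  "quot_iso_shift J I P \<longleftrightarrow>
     (\<exists>a (phi :: ('v, 'k) mpoly \<Rightarrow> ('v, 'k) mpoly).
        (\<forall>f g. phi (f + g) = phi f + phi g) \<and>
        (\<forall>s f. phi (s * f) = s * phi f) \<and>
        (\<forall>m. \<exists>c. phi (monom m) = Poly_Mapping.single (m + a) c) \<and>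
        (\<forall>f. phi f \<in> J) \<and>
        (\<forall>h\<in>J. \<exists>f. h - phi f \<in> I) \<and>
        (\<forall>f. phi f \<in> I \<longleftrightarrow> f \<in> P))"

text \<open>A prime filtration I = Is!0 \<subseteq> Is!1 \<subseteq> ... \<subseteq> Is!r = S with Is!j / Is!(j-1) \<cong> S/(Ps!(j-1))
  (up to shift), where the Ps are monomial prime ideals.\<close>
definition prime_filtration ::
  "('v, 'k::field) mpoly set \<Rightarrow> ('v, 'k) mpoly set list \<Rightarrow> ('v, 'k) mpoly set list \<Rightarrow> bool" where
  "prime_filtration I Is Ps \<longleftrightarrow>
     length Is = length Ps + 1 \<and> Is ! 0 = I \<and> Is ! length Ps = UNIV \<and>
     (\<forall>j < length Is. monomial_ideal (Is ! j)) \<and>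
     (\<forall>j < length Ps. is_prime_ideal (Ps ! j) \<and> monomial_ideal (Ps ! j)) \<and>
     (\<forall>j < length Ps. Is ! j \<subseteq> Is ! Suc j \<and> quot_iso_shift (Is ! Suc j) (Is ! j) (Ps ! j))"

definition pretty_clean_filtration ::
  "('v, 'k::field) mpoly set \<Rightarrow> ('v, 'k) mpoly set list \<Rightarrow> ('v, 'k) mpoly set list \<Rightarrow> bool" where
  "pretty_clean_filtration I Is Ps \<longleftrightarrow> prime_filtration I Is Ps \<and>
     (\<forall>i j. i < j \<and> j < length Ps \<and> Ps ! i \<subseteq> Ps ! j \<longrightarrow> Ps ! i = Ps ! j)"

definition pretty_clean :: "('v, 'k::field) mpoly set \<Rightarrow> bool" where
  "pretty_clean I \<longleftrightarrow> (\<exists>Is Ps. pretty_clean_filtration I Is Ps)"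

end

theory Submission imports Defs "HOL-Library.Countable" begin


type_synonym 'v mon = "'v \<Rightarrow>\<^sub>0 nat"

definition up :: "'v mon \<Rightarrow> 'v mon set" where
  "up a = {d. \<forall>v. Poly_Mapping.lookup a v \<le> Poly_Mapping.lookup d v}"
definition colon :: "'v mon set \<Rightarrow> 'v mon \<Rightarrow> 'v mon set" where
  "colon A a = {d. a + d \<in> A}"
definition vars :: "'v set \<Rightarrow> 'v mon set" where
  "vars W = {d. \<exists>v\<in>W. 0 < Poly_Mapping.lookup d v}"
definition upset :: "'v mon set \<Rightarrow> bool" where
  "upset A \<longleftrightarrow> (\<forall>a\<in>A. up a \<subseteq> A)"

fun valid :: "'v mon set \<Rightarrow> ('v mon \<times> 'v set) list \<Rightarrow> bool" where
  "valid A [] \<longleftrightarrow> A = UNIV"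
| "valid A ((a,W)#xs) \<longleftrightarrow> colon A a = vars W \<and> valid (A \<union> up a) xs"

definition pcr :: "('v mon \<times> 'v set) \<Rightarrow> ('v mon \<times> 'v set) \<Rightarrow> bool" where
  "pcr p q \<longleftrightarrow> (snd p \<subseteq> snd q \<longrightarrow> snd p = snd q)"

definition cpc :: "'v mon set \<Rightarrow> bool" where
  "cpc U \<longleftrightarrow> (\<exists>xs. valid U xs \<and> sorted_wrt pcr xs)"

lemma colon_Un: "colon (A \<union> B) a = colon A a \<union> colon B a"
  by (auto simp: colon_def)
lemma colon_colon: "colon (colon A a) c = colon A (a + c)"
  by (simp add: colon_def add.assoc)
lemma colon_UNIV[simp]: "colon UNIV a = UNIV"
  by (simp add: colon_def)
lemma colon_up: "colon (up c) a = up (c - a)"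
  by (auto simp: colon_def up_def lookup_add lookup_minus le_diff_conv add.commute)
lemma colon_vars: "Poly_Mapping.keys s \<inter> W = {} \<Longrightarrow> colon (vars W) s = vars W"
  by (auto simp: colon_def vars_def lookup_add in_keys_iff)
lemma colon_vars2: "Poly_Mapping.keys s \<inter> W \<noteq> {} \<Longrightarrow> colon (vars W) s = UNIV"
  by (auto simp: colon_def vars_def lookup_add in_keys_iff)
lemma up_single: "up (Poly_Mapping.single y 1) = vars {y}"
  by (auto simp: up_def vars_def lookup_single when_def)
lemma vars_insert: "vars (insert y W) = vars W \<union> vars {y}"
  by (auto simp: vars_def)
lemma vars_mono_iff: "vars W \<subseteq> vars W' \<longleftrightarrow> W \<subseteq> W'"
proof
  assume "vars W \<subseteq> vars W'"
  show "W \<subseteq> W'"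
  proof
    fix t assume "t \<in> W"
    then have "Poly_Mapping.single t (1::nat) \<in> vars W" by (auto simp: vars_def intro!: bexI[of _ t])
    with \<open>vars W \<subseteq> vars W'\<close> have "Poly_Mapping.single t (1::nat) \<in> vars W'" by auto
    then show "t \<in> W'" by (auto simp: vars_def lookup_single when_def split: if_splits)
  qed
qed (auto simp: vars_def)
lemma vars_inj: "vars W = vars W' \<longleftrightarrow> W = W'"
  by (metis order_antisym order_refl vars_mono_iff)

lemma up_self: "a \<in> up a" by (simp add: up_def)
lemma up_trans: "d \<in> up a \<Longrightarrow> e \<in> up d \<Longrightarrow> e \<in> up a"
  by (auto simp: up_def intro: order_trans)
lemma upset_up: "upset (up a)" by (auto simp: upset_def intro: up_trans)
lemma upset_Un: "upset A \<Longrightarrow> upset B \<Longrightarrow> upset (A \<union> B)" by (auto simp: upset_def)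
lemma upset_vars: "upset (vars W)"
  by (auto simp: upset_def vars_def up_def) (meson less_le_trans)
lemma upset_UNIV: "upset UNIV" by (simp add: upset_def)
lemma add_in_up: "a + c \<in> up a" by (simp add: up_def lookup_add)
lemma add_in_up2: "c + a \<in> up a" by (simp add: up_def lookup_add)
lemma up_decomp: "d \<in> up a \<Longrightarrow> d = a + (d - a)"
  by (rule poly_mapping_eqI) (auto simp: up_def lookup_add lookup_minus)
lemma upsetD: "upset A \<Longrightarrow> a \<in> A \<Longrightarrow> d \<in> up a \<Longrightarrow> d \<in> A"
  by (auto simp: upset_def)

lemma valid_UNIV_end: "valid A xs \<Longrightarrow> A \<union> (\<Union>p\<in>set xs. up (fst p)) = UNIV"
  by (induction A xs rule: valid.induct) (auto simp: sup_assoc)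



lemma sorted_wrt_allI: "(\<forall>p\<in>set xs. \<forall>q\<in>set xs. R p q) \<Longrightarrow> sorted_wrt R xs"
  by (induction xs) auto

fun cfil :: "'v mon \<Rightarrow> ('v mon \<times> 'v set) list \<Rightarrow> ('v mon \<times> 'v set) list" where
  "cfil w [] = []"
| "cfil w ((a,W)#xs) = (if Poly_Mapping.keys (w - a) \<inter> W = {} then [(a - w, W)] else []) @ cfil w xs"

lemma max_eq: "w + (a - w) = a + (w - (a::'v mon))"
  by (rule poly_mapping_eqI) (simp add: lookup_add lookup_minus)

lemma valid_cfil: "valid A xs \<Longrightarrow> valid (colon A w) (cfil w xs)"
proof (induction xs arbitrary: A)
  case Nil
  then show ?case by simp
next
  case (Cons p xs)
  obtain a W where p: "p = (a,W)" by (cases p)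
  from Cons.prems p have c: "colon A a = vars W" and v: "valid (A \<union> up a) xs" by auto
  from Cons.IH[OF v] have IH: "valid (colon A w \<union> up (a - w)) (cfil w xs)"
    by (simp add: colon_Un colon_up)
  have key: "colon (colon A w) (a - w) = colon (vars W) (w - a)"
    using c by (simp add: colon_colon max_eq) (metis colon_colon)
  show ?case
  proof (cases "Poly_Mapping.keys (w - a) \<inter> W = {}")
    case True
    then show ?thesis using key IH p colon_vars[OF True] by simp
  next
    case False
    have "up (a - w) \<subseteq> colon A w"
    proof
      fix d assume "d \<in> up (a - w)"
      then have d: "d = (a - w) + (d - (a - w))" by (rule up_decomp)
      have "d - (a - w) \<in> colon (colon A w) (a - w)"
        using key colon_vars2[OF False] by simp
      then show "d \<in> colon A w" using d by (simp add: colon_def)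
    qed
    then have "colon A w \<union> up (a - w) = colon A w" by auto
    then show ?thesis using IH p False by simp
  qed
qed

lemma set_cfil: "q \<in> set (cfil w xs) \<Longrightarrow> \<exists>a W. (a,W) \<in> set xs \<and> q = (a - w, W) \<and> Poly_Mapping.keys (w - a) \<inter> W = {}"
  by (induction w xs rule: cfil.induct) (auto split: if_splits)

lemma pc_cfil: "sorted_wrt pcr xs \<Longrightarrow> sorted_wrt pcr (cfil w xs)"
proof (induction w xs rule: cfil.induct)
  case (2 w a W xs)
  then show ?case
    by (auto simp: pcr_def dest!: set_cfil) (metis snd_conv)
qed simp

fun zfil :: "'v \<Rightarrow> ('v mon \<times> 'v set) list \<Rightarrow> ('v mon \<times> 'v set) list" where
  "zfil y [] = []"
| "zfil y ((a,W)#xs) = (if Poly_Mapping.lookup a y = 0 then [(a, W - {y})] else []) @ zfil y xs"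

definition zz :: "'v \<Rightarrow> 'v mon \<Rightarrow> 'v mon" where
  "zz y d = Poly_Mapping.update y 0 d"
definition phiz :: "'v \<Rightarrow> 'v mon set \<Rightarrow> 'v mon set" where
  "phiz y A = {d. zz y d \<in> A}"

lemma lookup_zz: "Poly_Mapping.lookup (zz y d) v = (if v = y then 0 else Poly_Mapping.lookup d v)"
  by (simp add: zz_def lookup_update)

lemma phiz_Un: "phiz y (A \<union> B) = phiz y A \<union> phiz y B" by (auto simp: phiz_def)
lemma phiz_up0: "Poly_Mapping.lookup a y = 0 \<Longrightarrow> phiz y (up a) = up a"
  by (auto simp: phiz_def up_def lookup_zz) (metis zero_le)
lemma phiz_up1: "Poly_Mapping.lookup a y \<noteq> 0 \<Longrightarrow> phiz y (up a) = {}"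
  by (auto simp: phiz_def up_def lookup_zz)
lemma phiz_colon: "Poly_Mapping.lookup a y = 0 \<Longrightarrow> colon (phiz y A) a = phiz y (colon A a)"
proof -
  assume a: "Poly_Mapping.lookup a y = 0"
  have "zz y (a + d) = a + zz y d" for d
    by (rule poly_mapping_eqI) (simp add: lookup_zz lookup_add a)
  then show ?thesis by (simp add: colon_def phiz_def)
qed
lemma phiz_vars: "phiz y (vars W) = vars (W - {y})"
  by (auto simp: phiz_def vars_def lookup_zz split: if_splits)
lemma phiz_UNIV: "phiz y UNIV = UNIV" by (simp add: phiz_def)

lemma valid_zfil: "valid A xs \<Longrightarrow> valid (phiz y A) (zfil y xs)"
proof (induction xs arbitrary: A)
  case Nil
  then show ?case by (simp add: phiz_UNIV)
next
  case (Cons p xs)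
  obtain a W where p: "p = (a,W)" by (cases p)
  from Cons.prems p have c: "colon A a = vars W" and v: "valid (A \<union> up a) xs" by auto
  from Cons.IH[OF v] have IH: "valid (phiz y A \<union> phiz y (up a)) (zfil y xs)"
    by (simp add: phiz_Un)
  show ?case
  proof (cases "Poly_Mapping.lookup a y = 0")
    case True
    then show ?thesis using IH p c by (simp add: phiz_up0 phiz_colon phiz_vars)
  next
    case False
    then show ?thesis using IH p by (simp add: phiz_up1)
  qed
qed

lemma valid_contains: "valid A xs \<Longrightarrow> vars {y} \<subseteq> A \<Longrightarrow> (a,W) \<in> set xs \<Longrightarrow> y \<in> W"
proof (induction A xs rule: valid.induct)
  case (1 A)
  then show ?case by simp
next
  case (2 A a' W' xs)
  show ?case
  proof (cases "(a,W) = (a',W')")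
    case True
    have "a' + Poly_Mapping.single y 1 \<in> vars {y}" by (simp add: vars_def lookup_add)
    with 2 have "Poly_Mapping.single y 1 \<in> colon A a'" by (auto simp: colon_def)
    with 2 True have "Poly_Mapping.single y 1 \<in> vars W" by simp
    then show ?thesis by (auto simp: vars_def lookup_single when_def split: if_splits)
  next
    case False
    with 2 show ?thesis by auto
  qed
qed

lemma set_zfil: "q \<in> set (zfil y xs) \<Longrightarrow> \<exists>a W. (a,W) \<in> set xs \<and> q = (a, W - {y})"
  by (induction y xs rule: zfil.induct) (auto split: if_splits)

lemma pc_zfil: "sorted_wrt pcr xs \<Longrightarrow> (\<forall>p\<in>set xs. y \<in> snd p) \<Longrightarrow> sorted_wrt pcr (zfil y xs)"
proof (induction y xs rule: zfil.induct)
  case (2 y a W xs)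
  then show ?case
    apply (auto simp: pcr_def dest!: set_zfil)
     apply (metis insert_Diff insert_mono snd_conv)+
    done
qed simp



definition sumE :: "'v list \<Rightarrow> 'v mon" where
  "sumE ys = sum_list (map (\<lambda>y. Poly_Mapping.single y (1::nat)) ys)"

lemma sumE_Nil[simp]: "sumE [] = 0" by (simp add: sumE_def)
lemma sumE_Cons[simp]: "sumE (y#ys) = Poly_Mapping.single y 1 + sumE ys" by (simp add: sumE_def)
lemma sumE_append[simp]: "sumE (xs @ ys) = sumE xs + sumE ys" by (simp add: sumE_def)
lemma sumE_replicate: "sumE (replicate n y) = Poly_Mapping.single y n"
  by (induction n) (simp_all add: single_add[symmetric])
lemma keys_sumE: "Poly_Mapping.keys (sumE ys) \<subseteq> set ys"
proof (induction ys)
  case (Cons y ys)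
  then show ?case using keys_add[of "Poly_Mapping.single y (1::nat)" "sumE ys"] by auto
qed simp

lemma ex_sumE: "\<exists>ys. sumE ys = d \<and> set ys \<subseteq> Poly_Mapping.keys d"
proof (induction d rule: update_induct)
  case const
  then show ?case by (rule exI[of _ "[]"]) simp
next
  case (update f a b)
  then obtain ys where ys: "sumE ys = f" "set ys \<subseteq> Poly_Mapping.keys f" by blast
  have u: "Poly_Mapping.update a b f = Poly_Mapping.single a b + f"
    using update by (intro poly_mapping_eqI) (auto simp: lookup_update lookup_add lookup_single when_def in_keys_iff)
  have k: "Poly_Mapping.keys (Poly_Mapping.update a b f) = insert a (Poly_Mapping.keys f)"
    using update by (simp add: keys_update)
  have "sumE (replicate b a @ ys) = Poly_Mapping.update a b f" by (simp add: u sumE_replicate ys)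
  moreover have "set (replicate b a @ ys) \<subseteq> Poly_Mapping.keys (Poly_Mapping.update a b f)"
    using ys(2) k by auto
  ultimately show ?case by blast
qed

fun blk :: "'v mon \<Rightarrow> 'v set \<Rightarrow> 'v list \<Rightarrow> ('v mon \<times> 'v set) list" where
  "blk a W [] = []"
| "blk a W (y#ys) = (a + sumE ys, insert y W) # blk a W ys"

lemma valid_blk:
  assumes "colon A a = vars W" "\<forall>v\<in>set ys. Poly_Mapping.lookup a v = 0 \<and> v \<notin> W"
    "\<forall>v. Poly_Mapping.lookup (sumE ys) v \<le> Poly_Mapping.lookup u v"
    "valid (A \<union> up a \<union> up u) rest"
  shows "valid (A \<union> up u \<union> up (a + sumE ys)) (blk a W ys @ rest)"
  using assms(2,3)
proof (induction ys)
  case Nil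
  then show ?case using assms(4) by (simp add: Un_ac)
next
  case (Cons y ys)
  define s where "s = sumE ys"
  define e where "e = Poly_Mapping.single y (1::nat)"
  have ay: "Poly_Mapping.lookup a y = 0" "y \<notin> W" using Cons.prems by auto
  have le: "\<forall>v. Poly_Mapping.lookup (sumE ys) v \<le> Poly_Mapping.lookup u v"
  proof
    fix v
    have "Poly_Mapping.lookup (sumE (y#ys)) v \<le> Poly_Mapping.lookup u v" using Cons.prems(2) by blast
    then show "Poly_Mapping.lookup (sumE ys) v \<le> Poly_Mapping.lookup u v" by (simp add: lookup_add)
  qed
  have IH: "valid (A \<union> up u \<union> up (a + s)) (blk a W ys @ rest)"
    using Cons.IH Cons.prems le by (simp add: s_def)
  have c1: "colon A (a + s) = vars W"
  proof -
    have "Poly_Mapping.keys s \<inter> W = {}" using keys_sumE[of ys] Cons.prems unfolding s_def by auto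
    then have "colon (colon A a) s = vars W" using assms(1) by (simp add: colon_vars)
    then show ?thesis by (simp add: colon_colon)
  qed
  have c2: "colon (up (a + (e + s))) (a + s) = vars {y}"
  proof -
    have "(a + (e + s)) - (a + s) = e" by (rule poly_mapping_eqI) (simp add: lookup_add lookup_minus)
    then have "colon (up (a + (e + s))) (a + s) = up e" by (simp add: colon_up)
    then show ?thesis unfolding e_def by (simp only: up_single)
  qed
  have c3: "colon (up u) (a + s) \<subseteq> vars {y}"
  proof
    fix d assume "d \<in> colon (up u) (a + s)"
    then have d: "d \<in> up (u - (a + s))" by (simp add: colon_up)
    have "Poly_Mapping.lookup (e + s) y \<le> Poly_Mapping.lookup u y"
      using Cons.prems(2) by (simp add: e_def s_def)
    then have "1 + Poly_Mapping.lookup s y \<le> Poly_Mapping.lookup u y" by (simp add: e_def lookup_add)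
    then have "0 < Poly_Mapping.lookup (u - (a + s)) y" by (simp add: lookup_minus lookup_add ay)
    moreover have "Poly_Mapping.lookup (u - (a + s)) y \<le> Poly_Mapping.lookup d y" using d by (simp add: up_def)
    ultimately have "0 < Poly_Mapping.lookup d y" by linarith
    then show "d \<in> vars {y}" by (simp add: vars_def)
  qed
  have col: "colon (A \<union> up u \<union> up (a + (e + s))) (a + s) = vars (insert y W)"
  proof -
    have "colon (A \<union> up u \<union> up (a + (e + s))) (a + s) = vars W \<union> colon (up u) (a + s) \<union> vars {y}"
      unfolding colon_Un c1 c2 by (rule refl)
    also have "\<dots> = vars W \<union> vars {y}" using c3 by blast
    also have "\<dots> = vars (insert y W)" by (rule vars_insert[symmetric])
    finally show ?thesis .
  qed
  have "up (a + (e + s)) \<subseteq> up (a + s)"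
  proof
    fix d assume "d \<in> up (a + (e + s))"
    moreover have "a + (e + s) \<in> up (a + s)" by (simp add: up_def lookup_add)
    ultimately show "d \<in> up (a + s)" by (rule up_trans[rotated])
  qed
  then have st: "A \<union> up u \<union> up (a + (e + s)) \<union> up (a + s) = A \<union> up u \<union> up (a + s)" by auto
  show ?case using col IH st by (simp add: e_def s_def)
qed

fun gen :: "'v list \<Rightarrow> ('v mon \<times> 'v set) list \<Rightarrow> ('v mon \<times> 'v set) list" where
  "gen ys [] = []"
| "gen ys ((a,W)#xs) = blk a W ys @ gen ys xs"

lemma valid_gen:
  "valid A xs \<Longrightarrow> (\<forall>p\<in>set xs. \<forall>v\<in>set ys. Poly_Mapping.lookup (fst p) v = 0 \<and> v \<notin> snd p)
   \<Longrightarrow> valid (A \<union> up (sumE ys)) (gen ys xs)"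
proof (induction xs arbitrary: A)
  case Nil
  then show ?case by simp
next
  case (Cons p xs)
  obtain a W where p: "p = (a,W)" by (cases p)
  from Cons.prems p have c: "colon A a = vars W" and v: "valid (A \<union> up a) xs" by auto
  have IH: "valid (A \<union> up a \<union> up (sumE ys)) (gen ys xs)" using Cons.IH[OF v] Cons.prems by auto
  have "valid (A \<union> up (sumE ys) \<union> up (a + sumE ys)) (blk a W ys @ gen ys xs)"
    using Cons.prems p by (intro valid_blk[OF c _ _ IH]) auto
  moreover have "up (a + sumE ys) \<subseteq> up (sumE ys)"
    using add_in_up2 up_trans by blast
  ultimately show ?case using p by (simp add: sup.absorb1 sup_assoc)
qed

lemma set_blk: "q \<in> set (blk a W ys) \<Longrightarrow> \<exists>y\<in>set ys. snd q = insert y W"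
  by (induction ys) auto

lemma set_gen: "q \<in> set (gen ys xs) \<Longrightarrow> \<exists>p\<in>set xs. \<exists>y\<in>set ys. snd q = insert y (snd p)"
  by (induction ys xs rule: gen.induct) (auto dest: set_blk)

lemma pc_blk: "\<forall>v\<in>set ys. v \<notin> W \<Longrightarrow> sorted_wrt pcr (blk a W ys)"
  by (rule sorted_wrt_allI) (auto simp: pcr_def dest!: set_blk)

lemma pc_gen: "sorted_wrt pcr xs \<Longrightarrow> (\<forall>p\<in>set xs. \<forall>v\<in>set ys. v \<notin> snd p) \<Longrightarrow> sorted_wrt pcr (gen ys xs)"
proof (induction ys xs rule: gen.induct)
  case (2 ys a W xs)
  have cross: "pcr p q" if pin: "p \<in> set (blk a W ys)" and qin: "q \<in> set (gen ys xs)" for p q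
  proof -
    obtain y where y: "y \<in> set ys" "snd p = insert y W" using set_blk[OF pin] by blast
    obtain p' y' where p': "p' \<in> set xs" "y' \<in> set ys" "snd q = insert y' (snd p')" using set_gen[OF qin] by blast
    have yW: "y \<notin> W" "y' \<notin> W" using 2 y p' by auto
    have pc: "W \<subseteq> snd p' \<longrightarrow> W = snd p'" using 2(2) p' by (auto simp: pcr_def)
    show ?thesis unfolding pcr_def
    proof
      assume "snd p \<subseteq> snd q"
      then have "insert y W \<subseteq> insert y' (snd p')" using y p' by simp
      then have "W \<subseteq> snd p'" using yW by auto
      then have "W = snd p'" using pc by simp
      moreover have "y = y'" using \<open>insert y W \<subseteq> insert y' (snd p')\<close> yW \<open>W = snd p'\<close> by auto
      ultimately show "snd p = snd q" using y p' by simp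
    qed
  qed
  show ?case using 2 by (auto simp: sorted_wrt_append intro!: pc_blk cross)
qed simp

lemma reg_le: "upset U \<Longrightarrow> colon U b = U \<Longrightarrow> (\<forall>v. Poly_Mapping.lookup c v \<le> Poly_Mapping.lookup b v) \<Longrightarrow> colon U c = U"
proof -
  assume u: "upset U" and b: "colon U b = U" and c: "\<forall>v. Poly_Mapping.lookup c v \<le> Poly_Mapping.lookup b v"
  show ?thesis
  proof
    show "colon U c \<subseteq> U"
    proof
      fix d assume "d \<in> colon U c"
      then have "c + d \<in> U" by (simp add: colon_def)
      moreover have "b + d \<in> up (c + d)" using c by (simp add: up_def lookup_add)
      ultimately have "b + d \<in> U" using u upsetD by blast
      then show "d \<in> U" using b by (auto simp: colon_def)
    qed
  next
    show "U \<subseteq> colon U c" using u by (auto simp: colon_def intro: upsetD add_in_up2)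
  qed
qed

lemma reg_sum: "colon U b = U \<Longrightarrow> colon U (\<Sum>i<(N::nat). b) = U"
  by (induction N) (simp_all add: colon_def, metis colon_colon colon_def)



lemma up_single': "up (Poly_Mapping.single y (Suc 0)) = vars {y}"
  using up_single[of y] by simp

lemma cpc_forward:
  assumes "upset U" "colon U b = U" "cpc U"
  shows "cpc (U \<union> up b)"
proof -
  obtain xs where xs: "valid U xs" "sorted_wrt pcr xs" using assms(3) unfolding cpc_def by blast
  define N where "N = Suc (sum_list (map (\<lambda>p. sum (Poly_Mapping.lookup (fst p)) (Poly_Mapping.keys b)) xs))"
  define w where "w = (\<Sum>i<N. b)"
  have lw: "Poly_Mapping.lookup w v = N * Poly_Mapping.lookup b v" for v by (simp add: w_def lookup_sum)
  have cw: "colon U w = U" using reg_sum assms(2) w_def by simp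
  define xs' where "xs' = cfil w xs"
  have v': "valid U xs'" using valid_cfil[OF xs(1), of w] cw xs'_def by simp
  have p': "sorted_wrt pcr xs'" using pc_cfil xs(2) xs'_def by simp
  have free: "\<forall>p\<in>set xs'. \<forall>v\<in>Poly_Mapping.keys b. Poly_Mapping.lookup (fst p) v = 0 \<and> v \<notin> snd p"
  proof (intro ballI)
    fix p v assume p: "p \<in> set xs'" and v: "v \<in> Poly_Mapping.keys b"
    obtain a W where aW: "(a,W) \<in> set xs" "p = (a - w, W)" "Poly_Mapping.keys (w - a) \<inter> W = {}"
    proof -
      have "p \<in> set (cfil w xs)" using p by (simp add: xs'_def)
      from set_cfil[OF this] show ?thesis by (meson that)
    qed
    have "Poly_Mapping.lookup a v \<le> sum (Poly_Mapping.lookup a) (Poly_Mapping.keys b)"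
      by (rule member_le_sum) (use v in auto)
    also have "\<dots> \<le> sum_list (map (\<lambda>p. sum (Poly_Mapping.lookup (fst p)) (Poly_Mapping.keys b)) xs)"
      by (rule member_le_sum_list) (use aW(1) in force)+
    finally have "Poly_Mapping.lookup a v < N" unfolding N_def by simp
    moreover have "N \<le> Poly_Mapping.lookup w v"
    proof -
      have "1 \<le> Poly_Mapping.lookup b v" using v by (simp add: in_keys_iff)
      then show ?thesis using lw[of v] by simp
    qed
    ultimately have lt: "Poly_Mapping.lookup a v < Poly_Mapping.lookup w v" by simp
    then have "Poly_Mapping.lookup (a - w) v = 0" by (simp add: lookup_minus)
    moreover from lt have "v \<in> Poly_Mapping.keys (w - a)" by (simp add: in_keys_iff lookup_minus)
    ultimately show "Poly_Mapping.lookup (fst p) v = 0 \<and> v \<notin> snd p" using aW by auto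
  qed
  obtain ys where ys: "sumE ys = b" "set ys \<subseteq> Poly_Mapping.keys b" using ex_sumE[of b] by blast
  have "valid (U \<union> up (sumE ys)) (gen ys xs')" using valid_gen[OF v'] free ys by blast
  moreover have "sorted_wrt pcr (gen ys xs')" using pc_gen[OF p'] free ys by blast
  ultimately show ?thesis using ys unfolding cpc_def by auto
qed

lemma cpc_backward:
  assumes U: "upset U" and reg: "colon U b = U" and b0: "b \<noteq> 0" and c: "cpc (U \<union> up b)"
  shows "cpc U"
proof -
  obtain y where y: "Poly_Mapping.lookup b y \<noteq> 0"
    using b0 by (metis lookup_zero poly_mapping_eqI)
  define e where "e = Poly_Mapping.single y (Suc 0)"
  define b' where "b' = b - e"
  have le: "\<forall>v. Poly_Mapping.lookup b' v \<le> Poly_Mapping.lookup b v" by (simp add: b'_def lookup_minus)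
  have cb': "colon U b' = U" using reg_le[OF U reg le] .
  have "b - b' = e"
    by (rule poly_mapping_eqI) (use y in \<open>auto simp: b'_def e_def lookup_minus lookup_single when_def\<close>)
  then have col: "colon (U \<union> up b) b' = U \<union> vars {y}"
    by (simp add: colon_Un colon_up cb' e_def up_single')
  obtain xs where xs: "valid (U \<union> up b) xs" "sorted_wrt pcr xs" using c unfolding cpc_def by blast
  define xs1 where "xs1 = cfil b' xs"
  have v1: "valid (U \<union> vars {y}) xs1" using valid_cfil[OF xs(1), of b'] col xs1_def by simp
  have p1: "sorted_wrt pcr xs1" using pc_cfil xs(2) xs1_def by simp
  have yin: "\<forall>p\<in>set xs1. y \<in> snd p"
  proof
    fix p assume "p \<in> set xs1"
    then show "y \<in> snd p" using valid_contains[OF v1, of y "fst p" "snd p"] by auto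
  qed
  have v2: "valid (phiz y (U \<union> vars {y})) (zfil y xs1)" using valid_zfil[OF v1] .
  have p2: "sorted_wrt pcr (zfil y xs1)" using pc_zfil[OF p1 yin] .
  have ce: "colon U e = U"
    by (rule reg_le[OF U reg]) (use y in \<open>auto simp: e_def lookup_single when_def\<close>)
  have phU: "phiz y U = U"
  proof
    show "phiz y U \<subseteq> U"
    proof
      fix d assume "d \<in> phiz y U"
      then have "zz y d \<in> U" by (simp add: phiz_def)
      moreover have "d \<in> up (zz y d)" by (simp add: up_def lookup_zz)
      ultimately show "d \<in> U" using U upsetD by blast
    qed
  next
    show "U \<subseteq> phiz y U"
    proof
      fix d assume d: "d \<in> U"
      define k where "k = Poly_Mapping.lookup d y"
      have sk: "(\<Sum>i<k. e) = Poly_Mapping.single y k"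
        by (rule poly_mapping_eqI) (simp add: lookup_sum e_def lookup_single when_def)
      have "colon U (\<Sum>i<k. e) = U" using reg_sum ce by blast
      then have ck: "colon U (Poly_Mapping.single y k) = U" using sk by simp
      have "d = Poly_Mapping.single y k + zz y d"
        by (rule poly_mapping_eqI) (simp add: lookup_add lookup_zz lookup_single when_def k_def)
      then have "zz y d \<in> colon U (Poly_Mapping.single y k)" using d by (simp add: colon_def)
      then show "d \<in> phiz y U" using ck by (simp add: phiz_def)
    qed
  qed
  have "phiz y (U \<union> vars {y}) = U"
    by (simp add: phiz_Un phiz_vars phU) (simp add: vars_def)
  then show ?thesis using v2 p2 unfolding cpc_def by auto
qed



definition mid :: "'v mon set \<Rightarrow> ('v, 'k::field) mpoly set" where
  "mid U = {f. Poly_Mapping.keys f \<subseteq> U}"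

lemma DEC: "f = (\<Sum>d\<in>Poly_Mapping.keys f. Poly_Mapping.single d (Poly_Mapping.lookup f d))"
  by (rule poly_mapping_eqI) (simp add: lookup_sum lookup_single when_def sum.delta in_keys_iff)

lemma ideal_sum: "is_ideal J \<Longrightarrow> (\<forall>i\<in>A. h i \<in> J) \<Longrightarrow> sum h A \<in> J"
proof (induction A rule: infinite_finite_induct)
  case (infinite A) then show ?case by (simp add: is_ideal_def)
next
  case empty then show ?case by (simp add: is_ideal_def)
next
  case (insert x F) then show ?case by (simp add: is_ideal_def)
qed

lemma ideal_mult: "is_ideal J \<Longrightarrow> f \<in> J \<Longrightarrow> s * f \<in> J" by (simp add: is_ideal_def)
lemma ideal_add: "is_ideal J \<Longrightarrow> f \<in> J \<Longrightarrow> g \<in> J \<Longrightarrow> f + g \<in> J" by (simp add: is_ideal_def)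
lemma ideal_one: "is_ideal J \<Longrightarrow> 1 \<in> J \<Longrightarrow> J = UNIV"
  by (auto simp: is_ideal_def) (metis mult.right_neutral)

lemma ideal_gen_ideal: "is_ideal (ideal_gen G)"
  unfolding ideal_gen_def is_ideal_def by auto
lemma ideal_gen_sub: "G \<subseteq> ideal_gen G"
  unfolding ideal_gen_def by auto
lemma ideal_gen_least: "is_ideal J \<Longrightarrow> G \<subseteq> J \<Longrightarrow> ideal_gen G \<subseteq> J"
  unfolding ideal_gen_def by auto

lemma mid_ideal: "upset U \<Longrightarrow> is_ideal (mid U :: ('v,'k::field) mpoly set)"
proof -
  assume u: "upset U"
  have 1: "Poly_Mapping.keys (f + g) \<subseteq> U" if "Poly_Mapping.keys f \<subseteq> U" "Poly_Mapping.keys g \<subseteq> U" for f g :: "('v,'k) mpoly"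
    using keys_add[of f g] that by auto
  have 2: "Poly_Mapping.keys (s * f) \<subseteq> U" if f: "Poly_Mapping.keys f \<subseteq> U" for s f :: "('v,'k) mpoly"
  proof
    fix d assume "d \<in> Poly_Mapping.keys (s * f)"
    then obtain x y where "d = x + y" "y \<in> Poly_Mapping.keys f" using keys_mult[of s f] by blast
    then show "d \<in> U" using f u upsetD add_in_up2 by blast
  qed
  show ?thesis unfolding is_ideal_def mid_def using 1 2 by auto
qed

lemma monom_mult: "monom a * monom b = (monom (a + b) :: ('v,'k::field) mpoly)"
  by (simp add: monom_def mult_single)

lemma single_as_mult: "Poly_Mapping.single d c = Poly_Mapping.single 0 c * (monom d :: ('v,'k::field) mpoly)"
  by (simp add: monom_def mult_single)

lemma mid_sub: "is_ideal J \<Longrightarrow> (\<forall>d\<in>U. monom d \<in> J) \<Longrightarrow> mid U \<subseteq> (J :: ('v,'k::field) mpoly set)"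
proof
  fix f :: "('v,'k) mpoly"
  assume J: "is_ideal J" and m: "\<forall>d\<in>U. monom d \<in> J" and f: "f \<in> mid U"
  have "(\<Sum>d\<in>Poly_Mapping.keys f. Poly_Mapping.single d (Poly_Mapping.lookup f d)) \<in> J"
  proof (rule ideal_sum[OF J], rule ballI)
    fix d assume "d \<in> Poly_Mapping.keys f"
    then have "monom d \<in> J" using m f by (auto simp: mid_def)
    then show "Poly_Mapping.single d (Poly_Mapping.lookup f d) \<in> J"
      using single_as_mult ideal_mult[OF J] by metis
  qed
  then show "f \<in> J" using DEC[of f] by simp
qed

lemma keys_monom: "Poly_Mapping.keys (monom d :: ('v,'k::field) mpoly) = {d}"
  by (simp add: monom_def)

lemma monom_in_mid: "(monom d :: ('v,'k::field) mpoly) \<in> mid U \<longleftrightarrow> d \<in> U"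
  by (simp add: mid_def keys_monom)

lemma mid_mono_iff: "(mid A :: ('v,'k::field) mpoly set) \<subseteq> mid B \<longleftrightarrow> A \<subseteq> B"
proof
  assume "(mid A :: ('v,'k::field) mpoly set) \<subseteq> mid B"
  then show "A \<subseteq> B" using monom_in_mid[where 'k='k] by blast
qed (auto simp: mid_def)

lemma mid_inj: "(mid A :: ('v,'k::field) mpoly set) = mid B \<longleftrightarrow> A = B"
  by (metis mid_mono_iff order_antisym order_refl)

lemma mid_UNIV: "mid UNIV = UNIV" by (simp add: mid_def)

lemma monomial_ideal_iff: "monomial_ideal (J :: ('v,'k::field) mpoly set) \<longleftrightarrow> (\<exists>U. upset U \<and> J = mid U)"
proof
  assume "monomial_ideal J"
  then obtain G where G: "\<forall>g\<in>G. is_monomial g" "J = ideal_gen G" by (auto simp: monomial_ideal_def)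
  define E where "E = {a. monom a \<in> G}"
  define U where "U = {d. \<exists>a\<in>E. d \<in> up a}"
  have uU: "upset U" unfolding upset_def U_def using up_trans by blast
  have GE: "G = monom ` E" using G(1) by (auto simp: E_def is_monomial_def)
  have "G \<subseteq> mid U"
  proof
    fix g assume "g \<in> G"
    then obtain a where a: "a \<in> E" "g = monom a" using GE by blast
    then have "a \<in> U" unfolding U_def using up_self by blast
    then show "g \<in> mid U" using a monom_in_mid by blast
  qed
  then have "J \<subseteq> mid U"
    unfolding G(2) by (rule ideal_gen_least[OF mid_ideal[OF uU]])
  moreover have "mid U \<subseteq> J"
  proof (rule mid_sub)
    show "is_ideal J" using G(2) ideal_gen_ideal by simp
    show "\<forall>d\<in>U. monom d \<in> J"
    proof
      fix d assume "d \<in> U"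
      then obtain a where a: "a \<in> E" "d \<in> up a" by (auto simp: U_def)
      have "monom a \<in> J" using a(1) G(2) ideal_gen_sub E_def by blast
      then have "monom (d - a) * monom a \<in> J" using ideal_mult G(2) ideal_gen_ideal by blast
      moreover have "monom (d - a) * monom a = (monom d :: ('v,'k) mpoly)"
      proof -
        have "(d - a) + a = d" using a(2) by (intro poly_mapping_eqI) (simp add: up_def lookup_add lookup_minus)
        then show ?thesis using monom_mult[of "d - a" a] by simp
      qed
      ultimately show "monom d \<in> J" by simp
    qed
  qed
  ultimately show "\<exists>U. upset U \<and> J = mid U" using uU by blast
next
  assume "\<exists>U. upset U \<and> J = mid U"
  then obtain U where U: "upset U" "J = mid U" by blast
  have "ideal_gen (monom ` U) = J"
  proof
    show "ideal_gen (monom ` U) \<subseteq> J"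
      unfolding U(2) by (rule ideal_gen_least[OF mid_ideal[OF U(1)]]) (auto simp: monom_in_mid)
    show "J \<subseteq> ideal_gen (monom ` U)"
      unfolding U(2) by (rule mid_sub[OF ideal_gen_ideal]) (use ideal_gen_sub in blast)
  qed
  then show "monomial_ideal J" unfolding monomial_ideal_def is_monomial_def by blast
qed

lemma ideal_gen_insert:
  assumes U: "upset U"
  shows "ideal_gen (mid U \<union> {monom b}) = (mid (U \<union> up b) :: ('v,'k::field) mpoly set)"
proof (rule subset_antisym)
  have uU: "upset (U \<union> up b)" by (rule upset_Un[OF U upset_up])
  show "ideal_gen (mid U \<union> {monom b}) \<subseteq> (mid (U \<union> up b) :: ('v,'k::field) mpoly set)"
  proof (rule ideal_gen_least[OF mid_ideal[OF uU]])
    have "(mid U :: ('v,'k::field) mpoly set) \<subseteq> mid (U \<union> up b)" by (simp add: mid_mono_iff)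
    moreover have "(monom b :: ('v,'k::field) mpoly) \<in> mid (U \<union> up b)" by (simp add: monom_in_mid up_self)
    ultimately show "mid U \<union> {monom b} \<subseteq> (mid (U \<union> up b) :: ('v,'k::field) mpoly set)" by blast
  qed
  show "(mid (U \<union> up b) :: ('v,'k::field) mpoly set) \<subseteq> ideal_gen (mid U \<union> {monom b})"
  proof (rule mid_sub[OF ideal_gen_ideal], rule ballI)
    fix d assume "d \<in> U \<union> up b"
    then show "(monom d :: ('v,'k) mpoly) \<in> ideal_gen (mid U \<union> {monom b})"
    proof
      assume "d \<in> U"
      then have "monom d \<in> (mid U :: ('v,'k::field) mpoly set)" by (simp add: monom_in_mid)
      then show ?thesis using ideal_gen_sub[of "mid U \<union> {monom b} :: ('v,'k) mpoly set"] by blast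
    next
      assume d: "d \<in> up b"
      have "(monom b :: ('v,'k) mpoly) \<in> ideal_gen (mid U \<union> {monom b})" using ideal_gen_sub[of "mid U \<union> {monom b} :: ('v,'k) mpoly set"] by blast
      then have "(monom (d - b) :: ('v,'k) mpoly) * monom b \<in> ideal_gen (mid U \<union> {monom b})" by (rule ideal_mult[OF ideal_gen_ideal])
      moreover have "monom (d - b) * monom b = (monom d :: ('v,'k) mpoly)"
      proof -
        have "(d - b) + b = d" using d by (intro poly_mapping_eqI) (simp add: up_def lookup_add lookup_minus)
        then show ?thesis using monom_mult[of "d - b" b] by simp
      qed
      ultimately show ?thesis by simp
    qed
  qed
qed



lemma monom_mult_eq: "monom a * (f :: ('v,'k::field) mpoly) =
  (\<Sum>y\<in>Poly_Mapping.keys f. Poly_Mapping.single (a + y) (Poly_Mapping.lookup f y))"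
proof -
  from DEC[of f] have "monom a * f = monom a * (\<Sum>y\<in>Poly_Mapping.keys f. Poly_Mapping.single y (Poly_Mapping.lookup f y))"
    by (rule arg_cong)
  also have "\<dots> = (\<Sum>y\<in>Poly_Mapping.keys f. Poly_Mapping.single (a + y) (Poly_Mapping.lookup f y))"
    by (simp add: sum_distrib_left monom_def mult_single)
  finally show ?thesis .
qed

lemma lookup_monom_mult: "Poly_Mapping.lookup (monom a * f) (a + x) = Poly_Mapping.lookup (f :: ('v,'k::field) mpoly) x"
  unfolding monom_mult_eq by (simp add: lookup_sum lookup_single when_def sum.delta in_keys_iff)

lemma keys_monom_mult: "Poly_Mapping.keys (monom a * f) = (\<lambda>x. a + x) ` Poly_Mapping.keys (f :: ('v,'k::field) mpoly)"
proof
  show "Poly_Mapping.keys (monom a * f) \<subseteq> (\<lambda>x. a + x) ` Poly_Mapping.keys f"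
    using keys_mult[of "monom a" f] by (auto simp: keys_monom)
  show "(\<lambda>x. a + x) ` Poly_Mapping.keys f \<subseteq> Poly_Mapping.keys (monom a * f)"
    by (auto simp: in_keys_iff lookup_monom_mult)
qed

lemma qis2:
  assumes A: "upset A"
  shows "quot_iso_shift (mid (A \<union> up a)) (mid A) (mid (colon A a) :: ('v,'k::field) mpoly set)"
proof -
  let ?phi = "\<lambda>f :: ('v,'k) mpoly. monom a * f"
  have h1: "\<forall>f g. ?phi (f + g) = ?phi f + ?phi g" by (simp add: distrib_left)
  have h2: "\<forall>s f. ?phi (s * f) = s * ?phi f" by (simp add: mult.left_commute)
  have h3: "\<forall>m. \<exists>c. ?phi (monom m) = Poly_Mapping.single (m + a) c"
  proof
    fix m show "\<exists>c. ?phi (monom m) = Poly_Mapping.single (m + a) c"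
      by (rule exI[of _ 1]) (simp add: monom_def mult_single add.commute)
  qed
  have h4: "\<forall>f. ?phi f \<in> mid (A \<union> up a)"
    by (auto simp: mid_def keys_monom_mult add_in_up)
  have h6: "\<forall>f. (?phi f \<in> mid A) = (f \<in> mid (colon A a))"
    by (auto simp: mid_def keys_monom_mult colon_def)
  have h5: "\<forall>h\<in>mid (A \<union> up a). \<exists>f. h - ?phi f \<in> mid A"
  proof
    fix h :: "('v,'k) mpoly" assume h: "h \<in> mid (A \<union> up a)"
    define K where "K = {d \<in> Poly_Mapping.keys h. d \<in> up a}"
    define f :: "('v,'k) mpoly" where "f = (\<Sum>d\<in>K. Poly_Mapping.single (d - a) (Poly_Mapping.lookup h d))"
    have K: "K \<subseteq> Poly_Mapping.keys h" by (auto simp: K_def)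
    have pf: "?phi f = (\<Sum>d\<in>K. Poly_Mapping.single d (Poly_Mapping.lookup h d))"
      unfolding f_def sum_distrib_left
    proof (rule sum.cong[OF refl])
      fix d assume "d \<in> K"
      then have "d \<in> up a" by (simp add: K_def)
      then have "a + (d - a) = d" by (metis up_decomp)
      then show "monom a * Poly_Mapping.single (d - a) (Poly_Mapping.lookup h d) = Poly_Mapping.single d (Poly_Mapping.lookup h d)"
        by (simp add: monom_def mult_single)
    qed
    have "h = (\<Sum>d\<in>Poly_Mapping.keys h. Poly_Mapping.single d (Poly_Mapping.lookup h d))" by (rule DEC)
    also have "\<dots> = (\<Sum>d\<in>Poly_Mapping.keys h - K. Poly_Mapping.single d (Poly_Mapping.lookup h d))
        + (\<Sum>d\<in>K. Poly_Mapping.single d (Poly_Mapping.lookup h d))"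
      by (rule sum.subset_diff[OF K finite_keys])
    finally have hs: "h = (\<Sum>d\<in>Poly_Mapping.keys h - K. Poly_Mapping.single d (Poly_Mapping.lookup h d))
        + (\<Sum>d\<in>K. Poly_Mapping.single d (Poly_Mapping.lookup h d))" .
    have "h - ?phi f = (\<Sum>d\<in>Poly_Mapping.keys h - K. Poly_Mapping.single d (Poly_Mapping.lookup h d))
        + (\<Sum>d\<in>K. Poly_Mapping.single d (Poly_Mapping.lookup h d)) - (\<Sum>d\<in>K. Poly_Mapping.single d (Poly_Mapping.lookup h d))"
      unfolding pf by (rule arg_cong[OF hs, where f="\<lambda>x. x - (\<Sum>d\<in>K. Poly_Mapping.single d (Poly_Mapping.lookup h d))"])
    then have "h - ?phi f = (\<Sum>d\<in>Poly_Mapping.keys h - K. Poly_Mapping.single d (Poly_Mapping.lookup h d))"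
      by simp
    moreover have "Poly_Mapping.keys (\<Sum>d\<in>Poly_Mapping.keys h - K. Poly_Mapping.single d (Poly_Mapping.lookup h d)) \<subseteq> A"
    proof -
      have "Poly_Mapping.keys (\<Sum>d\<in>Poly_Mapping.keys h - K. Poly_Mapping.single d (Poly_Mapping.lookup h d))
          \<subseteq> (\<Union>d\<in>Poly_Mapping.keys h - K. Poly_Mapping.keys (Poly_Mapping.single d (Poly_Mapping.lookup h d)))"
        by (rule keys_sum)
      also have "\<dots> \<subseteq> Poly_Mapping.keys h - K" by auto
      also have "\<dots> \<subseteq> A" using h by (auto simp: mid_def K_def)
      finally show ?thesis .
    qed
    ultimately have "h - ?phi f \<in> mid A" by (simp add: mid_def)
    then show "\<exists>f. h - ?phi f \<in> mid A" by blast
  qed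
  show ?thesis
    unfolding quot_iso_shift_def
    apply (rule exI[of _ a], rule exI[of _ ?phi])
    apply (intro conjI)
         apply (fact h1)
        apply (fact h2)
       apply (fact h3)
      apply (fact h4)
     apply (fact h5)
    apply (fact h6)
    done
qed

lemma qis1:
  assumes A: "upset A" and A': "upset A'" and sub: "A \<subseteq> A'"
    and pr: "is_prime_ideal (mid Q :: ('v,'k::field) mpoly set)"
    and q: "quot_iso_shift (mid A') (mid A) (mid Q :: ('v,'k) mpoly set)"
  shows "\<exists>a. A' = A \<union> up a \<and> colon A a = Q"
proof -
  from q obtain a and phi :: "('v,'k) mpoly \<Rightarrow> ('v,'k) mpoly" where
    ph2: "\<forall>s f. phi (s * f) = s * phi f" and ph3: "\<forall>m. \<exists>c. phi (monom m) = Poly_Mapping.single (m + a) c"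
    and ph4: "\<forall>f. phi f \<in> mid A'" and ph5: "\<forall>h\<in>mid A'. \<exists>f. h - phi f \<in> mid A"
    and ph6: "\<forall>f. (phi f \<in> mid A) = (f \<in> mid Q)"
    unfolding quot_iso_shift_def by blast
  obtain c where c: "phi (monom 0) = Poly_Mapping.single (0 + a) c" using ph3 by blast
  have p1: "phi 1 = Poly_Mapping.single a c" using c by (simp add: monom_def)
  have pf: "phi f = f * Poly_Mapping.single a c" for f
  proof -
    have "phi (f * 1) = f * phi 1" using ph2 by blast
    then show ?thesis using p1 by simp
  qed
  have idQ: "is_ideal (mid Q :: ('v,'k) mpoly set)" and nU: "(mid Q :: ('v,'k) mpoly set) \<noteq> UNIV"
    using pr by (auto simp: is_prime_ideal_def)
  have c0: "c \<noteq> 0"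
  proof
    assume "c = 0"
    then have "phi 1 = 0" using p1 by simp
    then have "phi 1 \<in> mid A" by (simp add: mid_def)
    then have "(1 :: ('v,'k) mpoly) \<in> mid Q" using ph6 by blast
    then show False using ideal_one[OF idQ] nU by blast
  qed
  have pm: "phi (monom d) = Poly_Mapping.single (d + a) c" for d
    using pf[of "monom d"] by (simp add: monom_def mult_single)
  have Qeq: "colon A a = Q"
  proof (rule set_eqI)
    fix d
    have "d \<in> Q \<longleftrightarrow> (monom d :: ('v,'k) mpoly) \<in> mid Q" by (simp add: monom_in_mid)
    also have "\<dots> \<longleftrightarrow> phi (monom d) \<in> mid A" using ph6 by blast
    also have "\<dots> \<longleftrightarrow> d + a \<in> A" using c0 by (simp add: pm mid_def)
    finally show "d \<in> colon A a \<longleftrightarrow> d \<in> Q" by (simp add: colon_def add.commute)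
  qed
  have aA': "a \<in> A'"
  proof -
    have "phi 1 \<in> mid A'" using ph4 by blast
    then show ?thesis using c0 by (simp add: p1 mid_def)
  qed
  have A'eq: "A' = A \<union> up a"
  proof
    show "A \<union> up a \<subseteq> A'" using sub aA' A' upsetD by blast
    show "A' \<subseteq> A \<union> up a"
    proof
      fix d assume d: "d \<in> A'"
      then have "(monom d :: ('v,'k) mpoly) \<in> mid A'" by (simp add: monom_in_mid)
      then obtain f where f: "monom d - phi f \<in> mid A" using ph5 by blast
      show "d \<in> A \<union> up a"
      proof (rule ccontr)
        assume nd: "d \<notin> A \<union> up a"
        have "d \<notin> Poly_Mapping.keys (phi f)"
        proof
          assume "d \<in> Poly_Mapping.keys (phi f)"
          then have "d \<in> Poly_Mapping.keys (f * Poly_Mapping.single a c)" by (simp add: pf)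
          then obtain x y where "d = x + y" "y \<in> Poly_Mapping.keys (Poly_Mapping.single a c)"
            using keys_mult[of f "Poly_Mapping.single a c"] by blast
          then have "d = x + a" using c0 by simp
          then have "d \<in> up a" by (simp add: add_in_up2)
          then show False using nd by simp
        qed
        then have "Poly_Mapping.lookup (monom d - phi f) d = 1"
          by (simp add: lookup_minus monom_def in_keys_iff)
        then have "d \<in> Poly_Mapping.keys (monom d - phi f)" by (simp add: in_keys_iff)
        then have "d \<in> A" using f by (auto simp: mid_def)
        then show False using nd by simp
      qed
    qed
  qed
  show ?thesis using Qeq A'eq by blast
qed



definition encE :: "('v::finite) mon \<Rightarrow> (nat \<Rightarrow>\<^sub>0 nat)" where
  "encE d = Abs_poly_mapping (\<lambda>n. if n \<in> range (to_nat :: 'v \<Rightarrow> nat) then Poly_Mapping.lookup d (inv to_nat n) else 0)"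

lemma lookup_Ee: "Poly_Mapping.lookup (encE (d :: ('v::finite) mon)) n = (if n \<in> range (to_nat :: 'v \<Rightarrow> nat) then Poly_Mapping.lookup d (inv to_nat n) else 0)"
proof -
  have "{n. (if n \<in> range (to_nat :: 'v \<Rightarrow> nat) then Poly_Mapping.lookup d (inv to_nat n) else 0) \<noteq> 0} \<subseteq> range (to_nat :: 'v \<Rightarrow> nat)"
    by auto
  moreover have "finite (range (to_nat :: 'v \<Rightarrow> nat))" by simp
  ultimately have "finite {n. (if n \<in> range (to_nat :: 'v \<Rightarrow> nat) then Poly_Mapping.lookup d (inv to_nat n) else 0) \<noteq> 0}"
    by (rule finite_subset)
  then show ?thesis unfolding encE_def by simp
qed

lemma Ee_add: "encE (a + b) = encE a + encE b"
  by (rule poly_mapping_eqI) (simp add: lookup_Ee lookup_add)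

lemma lookup_Ee_to_nat: "Poly_Mapping.lookup (encE d) (to_nat v) = Poly_Mapping.lookup d v"
  by (simp add: lookup_Ee)

lemma inj_Ee: "inj (encE :: ('v::finite) mon \<Rightarrow> _)"
proof (rule injI)
  fix a b :: "'v mon" assume "encE a = encE b"
  then have "Poly_Mapping.lookup (encE a) (to_nat v) = Poly_Mapping.lookup (encE b) (to_nat v)" for v by simp
  then show "a = b"
  proof (intro poly_mapping_eqI)
    fix k :: 'v
    have "Poly_Mapping.lookup (encE a) (to_nat k) = Poly_Mapping.lookup (encE b) (to_nat k)"
      using \<open>encE a = encE b\<close> by simp
    then show "Poly_Mapping.lookup a k = Poly_Mapping.lookup b k" by (simp add: lookup_Ee_to_nat)
  qed
qed

definition encF :: "('v::finite, 'k::field) mpoly \<Rightarrow> ((nat \<Rightarrow>\<^sub>0 nat) \<Rightarrow>\<^sub>0 'k)" where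
  "encF f = Abs_poly_mapping (\<lambda>k. if k \<in> range (encE :: 'v mon \<Rightarrow> nat \<Rightarrow>\<^sub>0 nat) then Poly_Mapping.lookup f (inv (encE :: 'v mon \<Rightarrow> nat \<Rightarrow>\<^sub>0 nat) k) else 0)"

lemma lookup_Ff: "Poly_Mapping.lookup (encF (f :: ('v::finite,'k::field) mpoly)) k = (if k \<in> range (encE :: 'v mon \<Rightarrow> nat \<Rightarrow>\<^sub>0 nat) then Poly_Mapping.lookup f (inv (encE :: 'v mon \<Rightarrow> nat \<Rightarrow>\<^sub>0 nat) k) else 0)"
proof -
  have "{k. (if k \<in> range (encE :: 'v mon \<Rightarrow> nat \<Rightarrow>\<^sub>0 nat) then Poly_Mapping.lookup f (inv (encE :: 'v mon \<Rightarrow> nat \<Rightarrow>\<^sub>0 nat) k) else 0) \<noteq> 0} \<subseteq> encE ` Poly_Mapping.keys f"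
  proof
    fix k assume "k \<in> {k. (if k \<in> range (encE :: 'v mon \<Rightarrow> nat \<Rightarrow>\<^sub>0 nat) then Poly_Mapping.lookup f (inv (encE :: 'v mon \<Rightarrow> nat \<Rightarrow>\<^sub>0 nat) k) else 0) \<noteq> 0}"
    then obtain x :: "'v mon" where x: "k = encE x" "Poly_Mapping.lookup f (inv (encE :: 'v mon \<Rightarrow> nat \<Rightarrow>\<^sub>0 nat) k) \<noteq> 0" by (auto split: if_splits)
    then have "Poly_Mapping.lookup f x \<noteq> 0" using inv_f_f[OF inj_Ee] by metis
    then show "k \<in> encE ` Poly_Mapping.keys f" using x by (auto simp: in_keys_iff)
  qed
  then have "finite {k. (if k \<in> range (encE :: 'v mon \<Rightarrow> nat \<Rightarrow>\<^sub>0 nat) then Poly_Mapping.lookup f (inv (encE :: 'v mon \<Rightarrow> nat \<Rightarrow>\<^sub>0 nat) k) else 0) \<noteq> 0}"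
    by (rule finite_subset) simp
  then show ?thesis unfolding encF_def by simp
qed

lemma lookup_Ff_Ee: "Poly_Mapping.lookup (encF (f :: ('v::finite,'k::field) mpoly)) (encE d) = Poly_Mapping.lookup f d"
  by (simp add: lookup_Ff inv_f_f[OF inj_Ee])

lemma Ff_add: "encF (f + g) = encF f + encF g"
  by (rule poly_mapping_eqI) (simp add: lookup_Ff lookup_add)

lemma Ff_zero: "encF 0 = 0"
  by (rule poly_mapping_eqI) (simp add: lookup_Ff)

lemma Ff_sum: "encF (sum h A) = (\<Sum>i\<in>A. encF (h i))"
  by (induction A rule: infinite_finite_induct) (simp_all add: Ff_zero Ff_add)

lemma Ff_single: "encF (Poly_Mapping.single (d :: ('v::finite) mon) (c :: 'k::field)) = Poly_Mapping.single (encE d) c"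
proof (rule poly_mapping_eqI)
  fix k
  show "Poly_Mapping.lookup (encF (Poly_Mapping.single d c)) k = Poly_Mapping.lookup (Poly_Mapping.single (encE d) c) k"
  proof (cases "k \<in> range (encE :: 'v mon \<Rightarrow> nat \<Rightarrow>\<^sub>0 nat)")
    case True
    then obtain x :: "'v mon" where x: "k = encE x" by blast
    have "(encE d = encE x) = (d = x)" using inj_Ee by (auto dest: injD)
    then show ?thesis using x by (simp add: lookup_Ff_Ee lookup_single when_def)
  next
    case False
    then have "encE d \<noteq> k" by auto
    then show ?thesis using False by (simp add: lookup_Ff lookup_single when_def)
  qed
qed

lemma prod_expand: "(f :: ('a::comm_monoid_add \<Rightarrow>\<^sub>0 'b::comm_ring_1)) * g =
  (\<Sum>d\<in>Poly_Mapping.keys f. \<Sum>e\<in>Poly_Mapping.keys g. Poly_Mapping.single (d + e) (Poly_Mapping.lookup f d * Poly_Mapping.lookup g e))"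
proof -
  have f: "f = (\<Sum>d\<in>Poly_Mapping.keys f. Poly_Mapping.single d (Poly_Mapping.lookup f d))"
    by (rule poly_mapping_eqI) (simp add: lookup_sum lookup_single when_def sum.delta in_keys_iff)
  have g: "g = (\<Sum>d\<in>Poly_Mapping.keys g. Poly_Mapping.single d (Poly_Mapping.lookup g d))"
    by (rule poly_mapping_eqI) (simp add: lookup_sum lookup_single when_def sum.delta in_keys_iff)
  have "f * g = (\<Sum>d\<in>Poly_Mapping.keys f. Poly_Mapping.single d (Poly_Mapping.lookup f d)) *
      (\<Sum>d\<in>Poly_Mapping.keys g. Poly_Mapping.single d (Poly_Mapping.lookup g d))"
    by (rule arg_cong2[OF f g])
  also have "\<dots> = (\<Sum>d\<in>Poly_Mapping.keys f. \<Sum>e\<in>Poly_Mapping.keys g. Poly_Mapping.single (d + e) (Poly_Mapping.lookup f d * Poly_Mapping.lookup g e))"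
    by (simp add: sum_product mult_single)
  finally show ?thesis .
qed

lemma Ff_DEC: "encF f = (\<Sum>d\<in>Poly_Mapping.keys f. Poly_Mapping.single (encE d) (Poly_Mapping.lookup f d))"
proof -
  have "encF f = encF (\<Sum>d\<in>Poly_Mapping.keys f. Poly_Mapping.single d (Poly_Mapping.lookup f d))"
    by (rule arg_cong[OF DEC])
  then show ?thesis by (simp add: Ff_sum Ff_single)
qed

lemma Ff_mult: "encF (f * g) = encF f * encF g"
proof -
  have "encF (f * g) = (\<Sum>d\<in>Poly_Mapping.keys f. \<Sum>e\<in>Poly_Mapping.keys g. Poly_Mapping.single (encE d + encE e) (Poly_Mapping.lookup f d * Poly_Mapping.lookup g e))"
    by (simp add: prod_expand[of f g] Ff_sum Ff_single Ee_add)
  also have "\<dots> = encF f * encF g"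
    by (simp add: Ff_DEC sum_product mult_single)
  finally show ?thesis .
qed

lemma Ff_eq0: "encF f = 0 \<Longrightarrow> f = 0"
  by (rule poly_mapping_eqI) (metis lookup_Ff_Ee lookup_zero)

lemma mpoly_no_zero_div: "(f :: ('v::finite, 'k::field) mpoly) * g = 0 \<Longrightarrow> f = 0 \<or> g = 0"
proof -
  assume "f * g = 0"
  then have "encF f * encF g = 0" by (metis Ff_mult Ff_zero)
  then have "encF f = 0 \<or> encF g = 0" by simp
  then show ?thesis using Ff_eq0 by blast
qed



lemma keys_diff_sub: "Poly_Mapping.keys (f - g) \<subseteq> Poly_Mapping.keys f \<union> Poly_Mapping.keys (g :: ('a \<Rightarrow>\<^sub>0 'b::ab_group_add))"
  by (auto simp: in_keys_iff lookup_minus)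

lemma split_poly:
  fixes h :: "('v, 'k::field) mpoly"
  shows "\<exists>h0 h1. h = h0 + h1 \<and> Poly_Mapping.keys h0 \<inter> V = {} \<and> Poly_Mapping.keys h1 \<subseteq> V \<and> (h0 = 0 \<longrightarrow> Poly_Mapping.keys h \<subseteq> V)"
proof -
  define h0 where "h0 = (\<Sum>d\<in>Poly_Mapping.keys h - V. Poly_Mapping.single d (Poly_Mapping.lookup h d))"
  define h1 where "h1 = (\<Sum>d\<in>Poly_Mapping.keys h \<inter> V. Poly_Mapping.single d (Poly_Mapping.lookup h d))"
  have "h = (\<Sum>d\<in>Poly_Mapping.keys h. Poly_Mapping.single d (Poly_Mapping.lookup h d))" by (rule DEC)
  also have "\<dots> = (\<Sum>d\<in>Poly_Mapping.keys h - Poly_Mapping.keys h \<inter> V. Poly_Mapping.single d (Poly_Mapping.lookup h d))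
      + (\<Sum>d\<in>Poly_Mapping.keys h \<inter> V. Poly_Mapping.single d (Poly_Mapping.lookup h d))"
    by (rule sum.subset_diff) auto
  also have "Poly_Mapping.keys h - Poly_Mapping.keys h \<inter> V = Poly_Mapping.keys h - V" by auto
  finally have hs: "h = h0 + h1" unfolding h0_def h1_def .
  have k0: "Poly_Mapping.keys h0 \<subseteq> Poly_Mapping.keys h - V"
  proof -
    have "Poly_Mapping.keys h0 \<subseteq> (\<Union>d\<in>Poly_Mapping.keys h - V. Poly_Mapping.keys (Poly_Mapping.single d (Poly_Mapping.lookup h d)))"
      unfolding h0_def by (rule keys_sum)
    also have "\<dots> \<subseteq> Poly_Mapping.keys h - V" by auto
    finally show ?thesis .
  qed
  have k1: "Poly_Mapping.keys h1 \<subseteq> V"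
  proof -
    have "Poly_Mapping.keys h1 \<subseteq> (\<Union>d\<in>Poly_Mapping.keys h \<inter> V. Poly_Mapping.keys (Poly_Mapping.single d (Poly_Mapping.lookup h d)))"
      unfolding h1_def by (rule keys_sum)
    also have "\<dots> \<subseteq> V" by auto
    finally show ?thesis .
  qed
  have z: "h0 = 0 \<longrightarrow> Poly_Mapping.keys h \<subseteq> V"
  proof (intro impI subsetI)
    fix d assume h00: "h0 = 0" and d: "d \<in> Poly_Mapping.keys h"
    show "d \<in> V"
    proof (rule ccontr)
      assume "d \<notin> V"
      then have "d \<notin> Poly_Mapping.keys h1" using k1 by auto
      then have "Poly_Mapping.lookup h d = Poly_Mapping.lookup h0 d + 0"
        using hs by (metis in_keys_iff lookup_add)
      then have "Poly_Mapping.lookup h d = 0" using h00 by simp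
      then show False using d by (simp add: in_keys_iff)
    qed
  qed
  show ?thesis using hs k0 k1 z by blast
qed

lemma vars_prime: "is_prime_ideal (mid (vars W) :: ('v::finite, 'k::field) mpoly set)"
  unfolding is_prime_ideal_def
proof (intro conjI allI impI)
  show "is_ideal (mid (vars W) :: ('v, 'k) mpoly set)" by (rule mid_ideal[OF upset_vars])
  have "(1 :: ('v,'k) mpoly) \<notin> mid (vars W)" by (simp add: mid_def vars_def)
  then show "(mid (vars W) :: ('v, 'k) mpoly set) \<noteq> UNIV" by blast
next
  fix f g :: "('v,'k) mpoly"
  assume fg: "f * g \<in> mid (vars W)"
  obtain f0 f1 where f: "f = f0 + f1" "Poly_Mapping.keys f0 \<inter> vars W = {}" "Poly_Mapping.keys f1 \<subseteq> vars W"
    "f0 = 0 \<longrightarrow> Poly_Mapping.keys f \<subseteq> vars W" using split_poly[of f "vars W"] by blast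
  obtain g0 g1 where g: "g = g0 + g1" "Poly_Mapping.keys g0 \<inter> vars W = {}" "Poly_Mapping.keys g1 \<subseteq> vars W"
    "g0 = 0 \<longrightarrow> Poly_Mapping.keys g \<subseteq> vars W" using split_poly[of g "vars W"] by blast
  define R where "R = f0 * g1 + f1 * g"
  have eq: "f * g = f0 * g0 + R" unfolding R_def f(1) g(1) by (simp add: algebra_simps)
  have kR: "Poly_Mapping.keys R \<subseteq> vars W"
  proof -
    have a: "Poly_Mapping.keys (f0 * g1) \<subseteq> vars W"
    proof
      fix d assume "d \<in> Poly_Mapping.keys (f0 * g1)"
      then obtain x y where "d = x + y" "y \<in> Poly_Mapping.keys g1" using keys_mult[of f0 g1] by blast
      then show "d \<in> vars W" using g(3) upset_vars upsetD add_in_up2 by blast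
    qed
    have b: "Poly_Mapping.keys (f1 * g) \<subseteq> vars W"
    proof
      fix d assume "d \<in> Poly_Mapping.keys (f1 * g)"
      then obtain x y where "d = x + y" "x \<in> Poly_Mapping.keys f1" using keys_mult[of f1 g] by blast
      then show "d \<in> vars W" using f(3) upset_vars upsetD add_in_up by blast
    qed
    show ?thesis unfolding R_def using keys_add[of "f0 * g1" "f1 * g"] a b by blast
  qed
  have "f0 * g0 = f * g - R" using eq by simp
  then have "Poly_Mapping.keys (f0 * g0) \<subseteq> vars W"
    using keys_diff_sub[of "f * g" R] fg kR by (auto simp: mid_def)
  moreover have "Poly_Mapping.keys (f0 * g0) \<inter> vars W = {}"
  proof -
    have "d \<notin> vars W" if dk: "d \<in> Poly_Mapping.keys (f0 * g0)" for d
    proof -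
      obtain x y where xy: "d = x + y" "x \<in> Poly_Mapping.keys f0" "y \<in> Poly_Mapping.keys g0"
        using keys_mult[of f0 g0] dk by blast
      have "x \<notin> vars W" "y \<notin> vars W" using xy f(2) g(2) by blast+
      then show ?thesis using xy(1) by (auto simp: vars_def lookup_add)
    qed
    then show ?thesis by blast
  qed
  ultimately have "Poly_Mapping.keys (f0 * g0) = {}" by blast
  then have "f0 * g0 = 0" by (metis in_keys_iff lookup_zero poly_mapping_eqI empty_iff)
  then have "f0 = 0 \<or> g0 = 0" by (rule mpoly_no_zero_div)
  then show "f \<in> mid (vars W) \<or> g \<in> mid (vars W)" using f(4) g(4) by (auto simp: mid_def)
qed

lemma prime_is_vars:
  assumes Q: "upset Q" and pr: "is_prime_ideal (mid Q :: ('v::finite, 'k::field) mpoly set)"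
  shows "Q = vars {v. Poly_Mapping.single v 1 \<in> Q}"
proof -
  define W where "W = {v. Poly_Mapping.single v (1::nat) \<in> Q}"
  have h1: "vars {v. Poly_Mapping.single v 1 \<in> Q} \<subseteq> Q"
  proof
    fix d assume "d \<in> vars {v. Poly_Mapping.single v 1 \<in> Q}"
    then obtain v where v: "Poly_Mapping.single v 1 \<in> Q" "0 < Poly_Mapping.lookup d v" by (auto simp: vars_def)
    have "d \<in> up (Poly_Mapping.single v 1)" using v(2) by (auto simp: up_def lookup_single when_def)
    then show "d \<in> Q" using Q v(1) upsetD by blast
  qed
  have idQ: "is_ideal (mid Q :: ('v,'k) mpoly set)" and nU: "(mid Q :: ('v,'k) mpoly set) \<noteq> UNIV"
    and prm: "\<forall>f g. f * g \<in> (mid Q :: ('v,'k) mpoly set) \<longrightarrow> f \<in> mid Q \<or> g \<in> mid Q"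
    using pr by (auto simp: is_prime_ideal_def)
  have main: "\<forall>d. sum (Poly_Mapping.lookup d) UNIV = n \<longrightarrow> d \<in> Q \<longrightarrow> d \<in> vars W" for n
  proof (induction n)
    case 0
    show ?case
    proof (intro allI impI)
      fix d assume s: "sum (Poly_Mapping.lookup d) UNIV = 0" and d: "d \<in> Q"
      have "d = 0" using s by (intro poly_mapping_eqI) simp
      then have "(1 :: ('v,'k) mpoly) \<in> mid Q" using d monom_in_mid[of 0 Q] by (simp add: monom_def)
      then show "d \<in> vars W" using ideal_one[OF idQ] nU by blast
    qed
  next
    case (Suc n)
    show ?case
    proof (intro allI impI)
      fix d assume s: "sum (Poly_Mapping.lookup d) UNIV = Suc n" and d: "d \<in> Q"
      have "\<exists>v. 0 < Poly_Mapping.lookup d v"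
      proof (rule ccontr)
        assume "\<not> (\<exists>v. 0 < Poly_Mapping.lookup d v)"
        then have "sum (Poly_Mapping.lookup d) UNIV = 0" by simp
        then show False using s by simp
      qed
      then obtain v where v: "0 < Poly_Mapping.lookup d v" by blast
      define e where "e = Poly_Mapping.single v (1::nat)"
      define d' where "d' = d - e"
      have dd: "d = e + d'"
        by (rule poly_mapping_eqI) (use v in \<open>auto simp: d'_def e_def lookup_add lookup_minus lookup_single when_def\<close>)
      have "(monom e :: ('v,'k) mpoly) * monom d' \<in> mid Q"
        using d dd monom_in_mid[of d Q] monom_mult[of e d'] by (metis)
      then have "(monom e :: ('v,'k) mpoly) \<in> mid Q \<or> (monom d' :: ('v,'k) mpoly) \<in> mid Q" using prm by blast
      then show "d \<in> vars W"
      proof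
        assume "(monom e :: ('v,'k) mpoly) \<in> mid Q"
        then have "v \<in> W" by (simp add: monom_in_mid W_def e_def)
        then show ?thesis using v by (auto simp: vars_def)
      next
        assume "(monom d' :: ('v,'k) mpoly) \<in> mid Q"
        then have d'Q: "d' \<in> Q" by (simp add: monom_in_mid)
        have "sum (Poly_Mapping.lookup d) UNIV = sum (Poly_Mapping.lookup e) UNIV + sum (Poly_Mapping.lookup d') UNIV"
          by (subst dd) (simp add: lookup_add sum.distrib)
        moreover have "sum (Poly_Mapping.lookup e) UNIV = 1"
          by (simp add: e_def lookup_single when_def)
        ultimately have "sum (Poly_Mapping.lookup d') UNIV = n" using s by simp
        then have "d' \<in> vars W" using Suc.IH d'Q by blast
        then obtain w where w: "w \<in> W" "0 < Poly_Mapping.lookup d' w" by (auto simp: vars_def)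
        have "Poly_Mapping.lookup d' w \<le> Poly_Mapping.lookup d w" by (simp add: d'_def lookup_minus)
        then show ?thesis using w unfolding vars_def by (intro CollectI bexI[of _ w]) (use w in auto)
      qed
    qed
  qed
  have "Q \<subseteq> vars W" using main by blast
  then show ?thesis using h1 unfolding W_def by blast
qed



definition stt :: "'v mon set \<Rightarrow> ('v mon \<times> 'v set) list \<Rightarrow> 'v mon set" where
  "stt A ys = A \<union> (\<Union>p\<in>set ys. up (fst p))"

lemma stt_Nil[simp]: "stt A [] = A" by (simp add: stt_def)
lemma stt_Cons: "stt A (p # ys) = stt (A \<union> up (fst p)) ys" by (auto simp: stt_def)

lemma valid_drop: "valid A xs \<Longrightarrow> k \<le> length xs \<Longrightarrow> valid (stt A (take k xs)) (drop k xs)"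
proof (induction xs arbitrary: A k)
  case Nil
  then show ?case by simp
next
  case (Cons p xs)
  obtain a W where p: "p = (a,W)" by (cases p)
  show ?case
  proof (cases k)
    case 0
    then show ?thesis using Cons.prems by simp
  next
    case (Suc k')
    have "valid (A \<union> up a) xs" using Cons.prems p by simp
    then have "valid (stt (A \<union> up a) (take k' xs)) (drop k' xs)" using Cons.IH Cons.prems Suc by simp
    then show ?thesis using Suc p by (simp add: stt_Cons)
  qed
qed

lemma valid_end: "valid A xs \<Longrightarrow> stt A xs = UNIV"
  using valid_drop[of A xs "length xs"] by simp

lemma stt_snoc: "j < length xs \<Longrightarrow> stt A (take (Suc j) xs) = stt A (take j xs) \<union> up (fst (xs ! j))"
  by (auto simp: stt_def take_Suc_conv_app_nth)

lemma upset_stt: "upset A \<Longrightarrow> upset (stt A ys)"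
  unfolding upset_def stt_def using up_trans by blast

lemma pc_to_poly:
  assumes U: "upset U" and c: "cpc U"
  shows "pretty_clean (mid U :: ('v::finite, 'k::field) mpoly set)"
proof -
  obtain xs where xs: "valid U xs" "sorted_wrt pcr xs" using c unfolding cpc_def by blast
  define r where "r = length xs"
  define Is :: "('v,'k) mpoly set list" where "Is = map (\<lambda>k. mid (stt U (take k xs))) [0..<Suc r]"
  define Ps :: "('v,'k) mpoly set list" where "Ps = map (\<lambda>p. mid (vars (snd p))) xs"
  have lI: "length Is = Suc r" and lP: "length Ps = r" by (simp_all add: Is_def Ps_def r_def)
  have Isn: "Is ! k = mid (stt U (take k xs))" if "k \<le> r" for k
    using that unfolding Is_def by (simp del: upt_Suc add: nth_map)
  have Psn: "Ps ! k = mid (vars (snd (xs ! k)))" if "k < r" for k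
    using that unfolding Ps_def r_def by simp
  have c1: "Is ! 0 = mid U" using Isn[of 0] by simp
  have c2: "Is ! length Ps = UNIV" using Isn[of r] lP valid_end[OF xs(1)] mid_UNIV r_def by simp
  have c3: "\<forall>j<length Is. monomial_ideal (Is ! j)"
  proof (intro allI impI)
    fix j assume "j < length Is"
    then have "Is ! j = mid (stt U (take j xs))" using Isn lI by simp
    then show "monomial_ideal (Is ! j)" using monomial_ideal_iff upset_stt[OF U] by blast
  qed
  have c4: "\<forall>j<length Ps. is_prime_ideal (Ps ! j) \<and> monomial_ideal (Ps ! j)"
  proof (intro allI impI)
    fix j assume "j < length Ps"
    then have "Ps ! j = mid (vars (snd (xs ! j)))" using Psn lP by simp
    then show "is_prime_ideal (Ps ! j) \<and> monomial_ideal (Ps ! j)"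
      using vars_prime monomial_ideal_iff upset_vars by metis
  qed
  have c5: "\<forall>j<length Ps. Is ! j \<subseteq> Is ! Suc j \<and> quot_iso_shift (Is ! Suc j) (Is ! j) (Ps ! j)"
  proof (intro allI impI)
    fix j assume j: "j < length Ps"
    then have jr: "j < r" using lP by simp
    obtain a W where aW: "xs ! j = (a, W)" by (cases "xs ! j")
    define S where "S = stt U (take j xs)"
    have I1: "Is ! j = mid S" using Isn jr S_def by simp
    have I2: "Is ! Suc j = mid (S \<union> up a)" using Isn[of "Suc j"] jr stt_snoc[of j xs U] aW S_def r_def by simp
    have P: "Ps ! j = mid (vars W)" using Psn jr aW by simp
    have "valid S (drop j xs)" using valid_drop[OF xs(1), of j] jr S_def r_def by simp
    moreover have "drop j xs = xs ! j # drop (Suc j) xs" using jr r_def by (simp add: Cons_nth_drop_Suc)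
    ultimately have col: "colon S a = vars W" using aW by simp
    have "quot_iso_shift (mid (S \<union> up a)) (mid S) (mid (colon S a) :: ('v,'k) mpoly set)"
      by (rule qis2) (simp add: S_def upset_stt[OF U])
    then show "Is ! j \<subseteq> Is ! Suc j \<and> quot_iso_shift (Is ! Suc j) (Is ! j) (Ps ! j)"
      using I1 I2 P col by (simp add: mid_mono_iff)
  qed
  have c6: "\<forall>i j. i < j \<and> j < length Ps \<and> Ps ! i \<subseteq> Ps ! j \<longrightarrow> Ps ! i = Ps ! j"
  proof (intro allI impI)
    fix i j assume h: "i < j \<and> j < length Ps \<and> Ps ! i \<subseteq> Ps ! j"
    then have ij: "i < j" "j < r" using lP by auto
    have "mid (vars (snd (xs ! i))) \<subseteq> (mid (vars (snd (xs ! j))) :: ('v,'k) mpoly set)"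
      using h Psn ij by simp
    then have "snd (xs ! i) \<subseteq> snd (xs ! j)" by (simp add: mid_mono_iff vars_mono_iff)
    moreover have "pcr (xs ! i) (xs ! j)" using xs(2) ij r_def by (simp add: sorted_wrt_iff_nth_less)
    ultimately have "snd (xs ! i) = snd (xs ! j)" by (simp add: pcr_def)
    then show "Ps ! i = Ps ! j" using Psn ij by simp
  qed
  have "pretty_clean_filtration (mid U) Is Ps"
    unfolding pretty_clean_filtration_def prime_filtration_def
    using lI lP c1 c2 c3 c4 c5 c6 by simp
  then show ?thesis unfolding pretty_clean_def by blast
qed



lemma poly_to_pc:
  assumes U: "upset U" and pcl: "pretty_clean (mid U :: ('v::finite, 'k::field) mpoly set)"
  shows "cpc U"
proof -
  obtain Is Ps where F: "pretty_clean_filtration (mid U :: ('v,'k) mpoly set) Is Ps"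
    using pcl unfolding pretty_clean_def by blast
  define r where "r = length Ps"
  have lI: "length Is = Suc r" and I0: "Is ! 0 = mid U" and Ir: "Is ! r = UNIV"
    and mI: "\<forall>j<length Is. monomial_ideal (Is ! j)"
    and pP: "\<forall>j<r. is_prime_ideal (Ps ! j) \<and> monomial_ideal (Ps ! j)"
    and sP: "\<forall>j<r. Is ! j \<subseteq> Is ! Suc j \<and> quot_iso_shift (Is ! Suc j) (Is ! j) (Ps ! j)"
    and cP: "\<forall>i j. i < j \<and> j < r \<and> Ps ! i \<subseteq> Ps ! j \<longrightarrow> Ps ! i = Ps ! j"
    using F unfolding pretty_clean_filtration_def prime_filtration_def r_def by auto
  define Us where "Us j = {d. (monom d :: ('v,'k) mpoly) \<in> Is ! j}" for j
  define Ws where "Ws j = {v. (monom (Poly_Mapping.single v 1) :: ('v,'k) mpoly) \<in> Ps ! j}" for j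
  have IsU: "upset (Us j) \<and> Is ! j = mid (Us j)" if "j \<le> r" for j
  proof -
    have "monomial_ideal (Is ! j)" using mI lI that by simp
    then obtain U' where U': "upset U'" "Is ! j = mid U'" using monomial_ideal_iff by blast
    have "Us j = U'" unfolding Us_def using U'(2) by (auto simp: monom_in_mid)
    then show ?thesis using U' by simp
  qed
  have PsW: "Ps ! j = mid (vars (Ws j))" and prW: "is_prime_ideal (mid (vars (Ws j)) :: ('v,'k) mpoly set)" if "j < r" for j
  proof -
    have pj: "is_prime_ideal (Ps ! j)" "monomial_ideal (Ps ! j)" using pP that by auto
    then obtain Q where Q: "upset Q" "Ps ! j = mid Q" using monomial_ideal_iff by blast
    have "Q = vars {v. Poly_Mapping.single v 1 \<in> Q}" using prime_is_vars[OF Q(1)] pj(1) Q(2) by simp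
    moreover have "{v. Poly_Mapping.single v 1 \<in> Q} = Ws j" unfolding Ws_def using Q(2) by (auto simp: monom_in_mid)
    ultimately show "Ps ! j = mid (vars (Ws j))" using Q(2) by simp
    then show "is_prime_ideal (mid (vars (Ws j)) :: ('v,'k) mpoly set)" using pj(1) by simp
  qed
  have step: "\<exists>a. Us (Suc j) = Us j \<union> up a \<and> colon (Us j) a = vars (Ws j)" if j: "j < r" for j
  proof (rule qis1[where 'k='k])
    show "upset (Us j)" using IsU j by simp
    show "upset (Us (Suc j))" using IsU j by simp
    have "Is ! j \<subseteq> Is ! Suc j" using sP j by simp
    then show "Us j \<subseteq> Us (Suc j)" using IsU[of j] IsU[of "Suc j"] j by (simp add: mid_mono_iff)
    show "is_prime_ideal (mid (vars (Ws j)) :: ('v,'k) mpoly set)" using prW j by simp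
    have "quot_iso_shift (Is ! Suc j) (Is ! j) (Ps ! j)" using sP j by simp
    then show "quot_iso_shift (mid (Us (Suc j))) (mid (Us j)) (mid (vars (Ws j)) :: ('v,'k) mpoly set)"
      using IsU[of j] IsU[of "Suc j"] PsW[of j] j by simp
  qed
  define as where "as j = (SOME a. Us (Suc j) = Us j \<union> up a \<and> colon (Us j) a = vars (Ws j))" for j
  have asP: "Us (Suc j) = Us j \<union> up (as j) \<and> colon (Us j) (as j) = vars (Ws j)" if "j < r" for j
    unfolding as_def by (rule someI_ex[OF step[OF that]])
  define xs where "xs = map (\<lambda>j. (as j, Ws j)) [0..<r]"
  have lx: "length xs = r" by (simp add: xs_def)
  have Ur: "Us r = UNIV"
  proof -
    have "mid (Us r) = (UNIV :: ('v,'k) mpoly set)" using IsU[of r] Ir by simp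
    then show ?thesis using mid_inj[where 'k='k] mid_UNIV by metis
  qed
  have V: "valid (Us (r - m)) (drop (r - m) xs)" if "m \<le> r" for m
    using that
  proof (induction m)
    case 0
    then show ?case using Ur lx by simp
  next
    case (Suc m)
    define k where "k = r - Suc m"
    have kr: "k < r" and sk: "Suc k = r - m" using Suc.prems by (auto simp: k_def)
    have "drop k xs = xs ! k # drop (Suc k) xs" using kr lx by (simp add: Cons_nth_drop_Suc)
    moreover have "xs ! k = (as k, Ws k)" using kr by (simp add: xs_def)
    moreover have "valid (Us (Suc k)) (drop (Suc k) xs)" using Suc.IH Suc.prems sk by simp
    ultimately have "valid (Us k) (drop k xs)" using asP[OF kr] by simp
    then show ?case by (simp add: k_def)
  qed
  have "valid (Us 0) xs" using V[of r] by simp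
  moreover have "Us 0 = U"
  proof -
    have "mid (Us 0) = (mid U :: ('v,'k) mpoly set)" using IsU[of 0] I0 by simp
    then show ?thesis using mid_inj[where 'k='k] by metis
  qed
  ultimately have vx: "valid U xs" by simp
  have px: "sorted_wrt pcr xs"
    unfolding sorted_wrt_iff_nth_less
  proof (intro allI impI)
    fix i j assume ij: "i < j" "j < length xs"
    then have jr: "j < r" "i < r" using lx by auto
    have xi: "xs ! i = (as i, Ws i)" and xj: "xs ! j = (as j, Ws j)" using jr by (simp_all add: xs_def)
    show "pcr (xs ! i) (xs ! j)"
      unfolding pcr_def xi xj snd_conv
    proof
      assume "Ws i \<subseteq> Ws j"
      then have "Ps ! i \<subseteq> Ps ! j" using PsW jr by (simp add: mid_mono_iff vars_mono_iff)
      then have "Ps ! i = Ps ! j" using cP ij jr by blast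
      then have "mid (vars (Ws i)) = (mid (vars (Ws j)) :: ('v,'k) mpoly set)" using PsW jr by simp
      then show "Ws i = Ws j" by (simp add: mid_inj vars_inj)
    qed
  qed
  show ?thesis unfolding cpc_def using vx px by blast
qed

lemma pc_iff: "upset U \<Longrightarrow> pretty_clean (mid U :: ('v::finite, 'k::field) mpoly set) \<longleftrightarrow> cpc U"
  using poly_to_pc pc_to_poly by blast

theorem theorem2p1:
  fixes I :: "('v::finite, 'k::field) mpoly set" and u :: "('v, 'k) mpoly"
  assumes "monomial_ideal I"
    and "is_monomial u"
    and "regular_on_quot u I"
  shows "pretty_clean I \<longleftrightarrow> pretty_clean (ideal_gen (I \<union> {u}))"
proof -
  obtain U where U: "upset U" "I = mid U" using assms(1) monomial_ideal_iff by blast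
  obtain b where b: "u = monom b" using assms(2) is_monomial_def by blast
  have r1: "\<forall>f. u * f \<in> I \<longrightarrow> f \<in> I" and r2: "ideal_gen (I \<union> {u}) \<noteq> UNIV"
    using assms(3) unfolding regular_on_quot_def by auto
  have reg: "colon U b = U"
  proof
    show "colon U b \<subseteq> U"
    proof
      fix d assume "d \<in> colon U b"
      then have "b + d \<in> U" by (simp add: colon_def)
      then have "u * monom d \<in> I" using U(2) b by (simp add: monom_mult monom_in_mid)
      then have "monom d \<in> I" using r1 by blast
      then show "d \<in> U" using U(2) by (simp add: monom_in_mid)
    qed
    show "U \<subseteq> colon U b" using U(1) by (auto simp: colon_def intro: upsetD add_in_up2)
  qed
  have gen: "ideal_gen (I \<union> {u}) = mid (U \<union> up b)" using ideal_gen_insert[OF U(1), of b] U(2) b by simp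
  have b0: "b \<noteq> 0"
  proof
    assume "b = 0"
    then have "up b = UNIV" by (simp add: up_def)
    then show False using r2 gen by (simp add: mid_def)
  qed
  have uU: "upset (U \<union> up b)" by (rule upset_Un[OF U(1) upset_up])
  have "cpc U \<longleftrightarrow> cpc (U \<union> up b)"
    using cpc_forward[OF U(1) reg] cpc_backward[OF U(1) reg b0] by blast
  then show ?thesis
    using pc_iff[OF U(1), where 'k='k] pc_iff[OF uU, where 'k='k] U(2) gen by simp
qed

end
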